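(* For any matrix $A\in\mathbb{R}^{m\times n}$ and $p\in\mathbb{Q}\cap(2,\infty)$, the dual problem of the maximization problem defining $\|A\|_{p_v}$ (given in the context) is $$ \begin{array}{lll} \|A\|_{p_v}= &\min & u_1+ u_2+\theta_p\sum_{i=1}^{m+n} t_i \\ &\textnormal{s.t.} & {v_i}^{p/(p-2)}\le t_i {u_1}^{2/(p-2)}\quad i=1,2,\dots, m \\ && {v_i}^{p/(p-2)}\le t_i {u_2}^{2/(p-2)}\quad i=m+1,m+2,\dots, m+n\\ && u_1\ge0, \,u_2\ge 0, \, \boldsymbol{t}\ge {\bf 0},\, D(\boldsymbol{v})\succeq \begin{pmatrix} O & A/2 \\ A^{\textnormal{T}}/2 & O \end{pmatrix}, \end{array} $$ where $\theta_p:=(2/p)^{2/(p-2)}-(2/p)^{p/(p-2)}>0$ when $p\in(2,\infty)$, and strong duality holds so the optimal value equals $\|A\|_{p_v}$.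
   Context: For $A\in\mathbb{R}^{m\times n}$ and $p\in\mathbb{Q}\cap(2,\infty)$, $$ \|A\|_{p_v}:= \max \left\{\left\langle \begin{pmatrix} O & A/2 \\ A^{\textnormal{T}}/2 & O \end{pmatrix}, X\right\rangle: \sum_{i=1}^m|x_{i i}|^{p/2} \le 1,\ \sum_{i=m+1}^{m+n}|x_{ii}|^{p/2} \le 1,\ X \succeq O\right\}, $$ with $X\in\mathbb{R}^{(m+n)\times(m+n)}$ symmetric. $D(\boldsymbol{v})$ denotes the diagonal matrix with diagonal vector $\boldsymbol{v}\in\mathbb{R}^{m+n}$; $\succeq$ is the positive semidefinite order. *)

theory Defs
  imports "HOL-Analysis.Analysis"
begin

text \<open>Matrices of size m x n are represented as real^'n^'m (m rows, n columns);
 (m+n) x (m+n) matrices are indexed by the sum type 'm + 'n, where Inl i stands for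
 index i in 1..m and Inr j for index m+j.\<close>

definition psd :: "real^'k::finite^'k \<Rightarrow> bool" where
  "psd X \<longleftrightarrow> (\<forall>x::real^'k. 0 \<le> x \<bullet> (X *v x))"

definition diag_mat :: "real^'k \<Rightarrow> real^'k^'k" where
  "diag_mat v = (\<chi> i j. if i = j then v $ i else 0)"

definition half_block :: "real^'n^'m \<Rightarrow> real^('m + 'n)^('m + 'n)" where
  "half_block A = (\<chi> i j. case (i, j) of
      (Inl a, Inr b) \<Rightarrow> A $ a $ b / 2
    | (Inr b, Inl a) \<Rightarrow> A $ a $ b / 2
    | _ \<Rightarrow> 0)"

definition frob_inner :: "real^'k^'k \<Rightarrow> real^'k^'k \<Rightarrow> real" where
  "frob_inner M X = (\<Sum>i\<in>UNIV. \<Sum>j\<in>UNIV. M $ i $ j * X $ i $ j)"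

definition pv_primal_feasible :: "real \<Rightarrow> real^('m::finite + 'n::finite)^('m + 'n) \<Rightarrow> bool" where
  "pv_primal_feasible p X \<longleftrightarrow>
     transpose X = X \<and> psd X \<and>
     (\<Sum>i\<in>UNIV. \<bar>X $ Inl i $ Inl i\<bar> powr (p/2)) \<le> 1 \<and>
     (\<Sum>j\<in>UNIV. \<bar>X $ Inr j $ Inr j\<bar> powr (p/2)) \<le> 1"

definition pv_norm :: "real \<Rightarrow> real^'n::finite^'m::finite \<Rightarrow> real" where
  "pv_norm p A = Sup {frob_inner (half_block A) X | X. pv_primal_feasible p X}"

definition theta :: "real \<Rightarrow> real" where
  "theta p = (2/p) powr (2/(p-2)) - (2/p) powr (p/(p-2))"

definition pv_dual_feasible ::
  "real \<Rightarrow> real^'n::finite^'m::finite \<Rightarrow> real \<Rightarrow> real \<Rightarrow> real^('m + 'n) \<Rightarrow> real^('m + 'n) \<Rightarrow> bool" where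
  "pv_dual_feasible p A u1 u2 t v \<longleftrightarrow>
     (\<forall>i. (v $ Inl i) powr (p/(p-2)) \<le> t $ Inl i * u1 powr (2/(p-2))) \<and>
     (\<forall>j. (v $ Inr j) powr (p/(p-2)) \<le> t $ Inr j * u2 powr (2/(p-2))) \<and>
     u1 \<ge> 0 \<and> u2 \<ge> 0 \<and> (\<forall>i. t $ i \<ge> 0) \<and>
     psd (diag_mat v - half_block A)"

definition pv_dual_obj :: "real \<Rightarrow> real \<Rightarrow> real \<Rightarrow> real^'k \<Rightarrow> real" where
  "pv_dual_obj p u1 u2 t = u1 + u2 + theta p * (\<Sum>i\<in>UNIV. t $ i)"

end

theory Submission
  imports Defs
begin

lemma ifz1: "(if P then u else (0::real)) * c = (if P then u * c else 0)" by simp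
lemma ifz2: "c * (if P then u else (0::real)) = (if P then c * u else 0)" by simp

lemma delta2:
  fixes X :: "'a \<Rightarrow> 'a \<Rightarrow> real"
  assumes "finite K" "a \<in> K" "b \<in> K"
  shows "(\<Sum>i\<in>K. \<Sum>k\<in>K. (if i = a then u else 0) * X i k * (if k = b then w else 0)) = u * X a b * w"
proof -
  have "(\<Sum>i\<in>K. \<Sum>k\<in>K. (if i = a then u else 0) * X i k * (if k = b then w else 0))
      = (\<Sum>i\<in>K. (if i = a then u else 0) * X i b * w)"
    by (rule sum.cong) (use assms in \<open>auto simp: ifz1 ifz2 sum.delta\<close>)
  also have "\<dots> = u * X a b * w" using assms by (simp add: ifz1 ifz2 sum.delta)
  finally show ?thesis .
qed

lemma quad2:
  fixes X :: "'a \<Rightarrow> 'a \<Rightarrow> real"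
  assumes "finite K" "a \<in> K" "j \<in> K" "a \<noteq> j"
  shows "(\<Sum>i\<in>K. \<Sum>k\<in>K. (if i = a then u else if i = j then w else 0) * X i k *
           (if k = a then u else if k = j then w else 0))
       = u * u * X a a + u * w * (X a j + X j a) + w * w * X j j"
proof -
  let ?f = "\<lambda>i. (if i = a then u else 0)" and ?g = "\<lambda>i. (if i = j then w else 0)"
  have e: "\<And>i. (if i = a then u else if i = j then w else 0) = ?f i + ?g i"
    using assms by auto
  have "(\<Sum>i\<in>K. \<Sum>k\<in>K. (if i = a then u else if i = j then w else 0) * X i k *
           (if k = a then u else if k = j then w else 0))
     = (\<Sum>i\<in>K. \<Sum>k\<in>K. ?f i * X i k * ?f k + ?f i * X i k * ?g k + ?g i * X i k * ?f k + ?g i * X i k * ?g k)"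
    unfolding e by (simp only: algebra_simps)
  also have "\<dots> = (\<Sum>i\<in>K. \<Sum>k\<in>K. ?f i * X i k * ?f k) + (\<Sum>i\<in>K. \<Sum>k\<in>K. ?f i * X i k * ?g k)
     + (\<Sum>i\<in>K. \<Sum>k\<in>K. ?g i * X i k * ?f k) + (\<Sum>i\<in>K. \<Sum>k\<in>K. ?g i * X i k * ?g k)"
    by (simp only: sum.distrib)
  also have "\<dots> = u * X a a * u + u * X a j * w + w * X j a * u + w * X j j * w"
    using assms by (simp only: delta2)
  finally show ?thesis by (simp add: algebra_simps)
qed

lemma drop_a:
  fixes g :: "'a \<Rightarrow> 'a \<Rightarrow> real"
  assumes "finite K" "a \<notin> K" "\<And>i j. i \<in> insert a K \<Longrightarrow> j \<in> insert a K \<Longrightarrow> i = a \<or> j = a \<Longrightarrow> g i j = 0"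
  shows "(\<Sum>i\<in>insert a K. \<Sum>j\<in>insert a K. g i j) = (\<Sum>i\<in>K. \<Sum>j\<in>K. g i j)"
proof -
  have "(\<Sum>i\<in>insert a K. \<Sum>j\<in>insert a K. g i j) = (\<Sum>j\<in>insert a K. g a j) + (\<Sum>i\<in>K. \<Sum>j\<in>insert a K. g i j)"
    using assms by simp
  also have "(\<Sum>j\<in>insert a K. g a j) = 0" using assms by (intro sum.neutral) auto
  also have "(\<Sum>i\<in>K. \<Sum>j\<in>insert a K. g i j) = (\<Sum>i\<in>K. \<Sum>j\<in>K. g i j)"
  proof (rule sum.cong)
    fix i assume "i \<in> K"
    then show "(\<Sum>j\<in>insert a K. g i j) = (\<Sum>j\<in>K. g i j)" using assms by (simp add: sum.insert)
  qed simp
  finally show ?thesis by simp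
qed

definition qf :: "'a set \<Rightarrow> ('a \<Rightarrow> 'a \<Rightarrow> real) \<Rightarrow> ('a \<Rightarrow> real) \<Rightarrow> real" where
  "qf K X x = (\<Sum>i\<in>K. \<Sum>j\<in>K. x i * X i j * x j)"

lemma qf_diag_nonneg:
  assumes "finite K" "a \<in> K" "\<forall>x. 0 \<le> qf K X x"
  shows "0 \<le> X a a"
proof -
  have "0 \<le> qf K X (\<lambda>i. if i = a then 1 else 0)" using assms by blast
  also have "\<dots> = 1 * X a a * 1" unfolding qf_def by (rule delta2) (use assms in auto)
  finally show ?thesis by simp
qed

lemma qf_zero_diag:
  assumes "finite K" "a \<in> K" "j \<in> K" "\<forall>x. 0 \<le> qf K X x" "X a a = 0" "\<forall>i k. X i k = X k i"
  shows "X a j = 0"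
proof (cases "a = j")
  case True then show ?thesis using assms by simp
next
  case False
  have *: "\<forall>w. 0 \<le> w * w * X j j + 2 * w * X a j"
  proof
    fix w
    have "0 \<le> qf K X (\<lambda>i. if i = a then 1 else if i = j then w else 0)" using assms by blast
    also have "\<dots> = 1 * 1 * X a a + 1 * w * (X a j + X j a) + w * w * X j j"
      unfolding qf_def by (rule quad2) (use assms False in auto)
    finally show "0 \<le> w * w * X j j + 2 * w * X a j" using assms by (simp add: algebra_simps)
  qed
  show ?thesis
  proof (rule ccontr)
    assume ne: "X a j \<noteq> 0"
    have jj: "0 \<le> X j j" by (rule qf_diag_nonneg) (use assms in auto)
    define w where "w = - X a j / (X j j + 1)"
    have "0 \<le> w * w * X j j + 2 * w * X a j" using * by blast
    also have "w * w * X j j + 2 * w * X a j = w * w * (- X j j - 2)"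
    proof -
      have "X j j + 1 \<noteq> 0" using jj by linarith
      then have "X a j = - w * (X j j + 1)" unfolding w_def by simp
      then show ?thesis by (simp only:) (simp add: algebra_simps)
    qed
    also have "\<dots> < 0"
    proof -
      have "w \<noteq> 0" unfolding w_def using ne jj by simp
      then have "0 < w * w" by (metis zero_less_mult_iff linorder_neqE_linordered_idom mult_neg_neg)
      then show ?thesis using jj by (simp add: mult_pos_neg)
    qed
    finally show False by simp
  qed
qed

lemma qf_restrict:
  assumes "finite K" "a \<notin> K" "y a = 0" "\<And>i. i \<in> K \<Longrightarrow> y i = x i"
  shows "qf (insert a K) Y y = qf K Y x"
proof -
  have "qf (insert a K) Y y = (\<Sum>i\<in>K. \<Sum>j\<in>K. y i * Y i j * y j)"
    unfolding qf_def by (rule drop_a) (use assms in auto)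
  also have "\<dots> = qf K Y x" unfolding qf_def using assms by (intro sum.cong refl) auto
  finally show ?thesis .
qed

lemma qf_restrict2:
  assumes "finite K" "a \<notin> K" "\<And>j. j \<in> insert a K \<Longrightarrow> Y a j = 0" "\<And>i. i \<in> insert a K \<Longrightarrow> Y i a = 0"
     "\<And>i. i \<in> K \<Longrightarrow> y i = x i"
  shows "qf (insert a K) Y y = qf K Y x"
proof -
  have "qf (insert a K) Y y = (\<Sum>i\<in>K. \<Sum>j\<in>K. y i * Y i j * y j)"
    unfolding qf_def by (rule drop_a) (use assms in auto)
  also have "\<dots> = qf K Y x" unfolding qf_def using assms by (intro sum.cong refl) auto
  finally show ?thesis .
qed

lemma alg1:
  "(\<Sum>i\<in>K. \<Sum>j\<in>K. y i * (X i j - r i * r j / c) * y j) = qf K X y - (\<Sum>i\<in>K. r i * y i) * (\<Sum>j\<in>K. r j * y j) / c"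
proof -
  have "(\<Sum>i\<in>K. \<Sum>j\<in>K. y i * (X i j - r i * r j / c) * y j) =
     (\<Sum>i\<in>K. \<Sum>j\<in>K. y i * X i j * y j) - (\<Sum>i\<in>K. \<Sum>j\<in>K. (r i * y i) * (r j * y j) / c)"
    by (simp add: sum_subtractf algebra_simps)
  also have "(\<Sum>i\<in>K. \<Sum>j\<in>K. (r i * y i) * (r j * y j) / c) = (\<Sum>i\<in>K. r i * y i) * (\<Sum>j\<in>K. r j * y j) / c"
    by (simp add: sum_product sum_divide_distrib)
  finally show ?thesis unfolding qf_def .
qed

lemma alg2:
  "(\<Sum>i\<in>K. \<Sum>j\<in>K. M i j * (X i j - r i * r j / c)) = (\<Sum>i\<in>K. \<Sum>j\<in>K. M i j * X i j) - qf K M r / c"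
proof -
  have "(\<Sum>i\<in>K. \<Sum>j\<in>K. M i j * (X i j - r i * r j / c)) =
     (\<Sum>i\<in>K. \<Sum>j\<in>K. M i j * X i j) - (\<Sum>i\<in>K. \<Sum>j\<in>K. r i * M i j * r j / c)"
    by (simp add: sum_subtractf algebra_simps)
  also have "(\<Sum>i\<in>K. \<Sum>j\<in>K. r i * M i j * r j / c) = qf K M r / c"
    by (simp add: qf_def sum_divide_distrib)
  finally show ?thesis .
qed

lemma trace_psd_fin:
  assumes "finite K"
  shows "(\<forall>i j. X i j = X j i) \<Longrightarrow> (\<forall>x. 0 \<le> qf K X x) \<Longrightarrow> (\<forall>x. 0 \<le> qf K M x)
     \<Longrightarrow> 0 \<le> (\<Sum>i\<in>K. \<Sum>j\<in>K. M i j * X i j)"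
  using assms
proof (induction K arbitrary: X rule: finite_induct)
  case empty
  then show ?case by simp
next
  case (insert a K)
  let ?Ka = "insert a K"
  have MK: "\<forall>x. 0 \<le> qf K M x"
  proof
    fix x
    have "qf ?Ka M (x(a := 0)) = qf K M x" by (rule qf_restrict) (use insert in auto)
    then show "0 \<le> qf K M x" using insert.prems by metis
  qed
  show ?case
  proof (cases "X a a = 0")
    case True
    have Xa: "X a j = 0" if "j \<in> ?Ka" for j
      by (rule qf_zero_diag[of ?Ka]) (use insert True that in auto)
    have Xa': "X i a = 0" if "i \<in> ?Ka" for i using Xa[OF that] insert.prems(1) by metis
    have XK: "\<forall>x. 0 \<le> qf K X x"
    proof
      fix x
      have "qf ?Ka X (x(a := 0)) = qf K X x" by (rule qf_restrict) (use insert in auto)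
      then show "0 \<le> qf K X x" using insert.prems by metis
    qed
    have "(\<Sum>i\<in>?Ka. \<Sum>j\<in>?Ka. M i j * X i j) = (\<Sum>i\<in>K. \<Sum>j\<in>K. M i j * X i j)"
      by (rule drop_a) (use insert Xa Xa' in auto)
    then show ?thesis using insert.IH[OF insert.prems(1) XK MK] by simp
  next
    case False
    define c where "c = X a a"
    have c0: "0 < c" using qf_diag_nonneg[of ?Ka a X] insert False unfolding c_def by auto
    define X' where "X' = (\<lambda>i j. X i j - X a i * X a j / c)"
    have sym': "\<forall>i j. X' i j = X' j i" unfolding X'_def using insert.prems(1) by (simp add: mult.commute)
    have X'a: "X' a j = 0" for j unfolding X'_def c_def using False by simp
    have X'a': "X' i a = 0" for i unfolding X'_def c_def using False insert.prems(1) by simp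
    have XK: "\<forall>x. 0 \<le> qf K X' x"
    proof
      fix x
      define y where "y = x(a := - (\<Sum>k\<in>K. X a k * x k) / c)"
      have "qf K X' x = qf ?Ka X' y" by (rule qf_restrict2[symmetric]) (use insert X'a X'a' in \<open>auto simp: y_def\<close>)
      also have "\<dots> = qf ?Ka X y - (\<Sum>i\<in>?Ka. X a i * y i) * (\<Sum>j\<in>?Ka. X a j * y j) / c"
        unfolding qf_def X'_def by (rule alg1[unfolded qf_def])
      also have "(\<Sum>i\<in>?Ka. X a i * y i) = 0"
      proof -
        have "(\<Sum>i\<in>?Ka. X a i * y i) = c * y a + (\<Sum>i\<in>K. X a i * y i)"
          using insert by (simp add: c_def)
        also have "(\<Sum>i\<in>K. X a i * y i) = (\<Sum>i\<in>K. X a i * x i)"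
          using insert by (intro sum.cong) (auto simp: y_def)
        finally show ?thesis using c0 by (simp add: y_def)
      qed
      finally show "0 \<le> qf K X' x" using insert.prems(2) by simp
    qed
    have "(\<Sum>i\<in>?Ka. \<Sum>j\<in>?Ka. M i j * X i j) = (\<Sum>i\<in>?Ka. \<Sum>j\<in>?Ka. M i j * X' i j) + qf ?Ka M (X a) / c"
      unfolding X'_def alg2 by simp
    also have "(\<Sum>i\<in>?Ka. \<Sum>j\<in>?Ka. M i j * X' i j) = (\<Sum>i\<in>K. \<Sum>j\<in>K. M i j * X' i j)"
      by (rule drop_a) (use insert.hyps X'a X'a' in auto)
    moreover have "0 \<le> qf ?Ka M (X a) / c" using insert.prems(3) c0 by simp
    ultimately show ?thesis using insert.IH[OF sym' XK MK] by linarith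
  qed
qed

lemma inner_qf: "x \<bullet> (X *v x) = qf UNIV (\<lambda>i j. X$i$j) (\<lambda>i. x$i)"
  unfolding inner_vec_def matrix_vector_mult_def qf_def
  by (simp add: sum_distrib_left mult.assoc mult.left_commute)

lemma psd_iff_qf: "psd X \<longleftrightarrow> (\<forall>f. 0 \<le> qf UNIV (\<lambda>i j. X$i$j) f)"
proof
  assume "psd X"
  show "\<forall>f. 0 \<le> qf UNIV (\<lambda>i j. X$i$j) f"
  proof
    fix f :: "'a \<Rightarrow> real"
    have "0 \<le> (\<chi> i. f i) \<bullet> (X *v (\<chi> i. f i))" using \<open>psd X\<close> unfolding psd_def by blast
    moreover have "(\<lambda>i. (\<chi> i. f i) $ i) = f" by simp
    ultimately show "0 \<le> qf UNIV (\<lambda>i j. X$i$j) f" unfolding inner_qf by metis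
  qed
next
  assume "\<forall>f. 0 \<le> qf UNIV (\<lambda>i j. X$i$j) f"
  then show "psd X" unfolding psd_def inner_qf by blast
qed

lemma transpose_sym: "transpose X = X \<Longrightarrow> X$i$j = X$j$i"
  by (metis transpose_def vec_lambda_beta)

lemma trace_psd:
  fixes M X :: "real^'k::finite^'k"
  assumes "psd M" "psd X" "transpose X = X"
  shows "0 \<le> frob_inner M X"
  unfolding frob_inner_def
  by (rule trace_psd_fin[of UNIV "\<lambda>i j. X$i$j" "\<lambda>i j. M$i$j"])
     (use assms transpose_sym[OF assms(3)] in \<open>auto simp: psd_iff_qf\<close>)

lemma frob_diag: "frob_inner (diag_mat v) X = (\<Sum>i\<in>UNIV. v$i * X$i$i)"
  unfolding frob_inner_def diag_mat_def by (simp add: ifz1 sum.delta)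

lemma frob_diff: "frob_inner (M - N) X = frob_inner M X - frob_inner N X"
  unfolding frob_inner_def by (simp add: sum_subtractf left_diff_distrib)

lemma frob_lin: "frob_inner M (a *\<^sub>R X + b *\<^sub>R Y) = a * frob_inner M X + b * frob_inner M Y"
  unfolding frob_inner_def by (simp add: sum.distrib sum_distrib_left algebra_simps)

lemma frob_zero: "frob_inner M 0 = 0"
  unfolding frob_inner_def by simp

definition outer :: "real^'k \<Rightarrow> real^'k^'k" where
  "outer x = (\<chi> i j. x$i * x$j)"

lemma frob_outer: "frob_inner M (outer x) = x \<bullet> (M *v x)"
  unfolding frob_inner_def outer_def inner_qf qf_def by (simp add: algebra_simps)

lemma outer_psd: "psd (c *\<^sub>R outer x)" if "c \<ge> 0"
proof -
  have "y \<bullet> ((c *\<^sub>R outer x) *v y) = c * (x \<bullet> y) * (x \<bullet> y)" for y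
  proof -
    have "y \<bullet> ((c *\<^sub>R outer x) *v y) = qf UNIV (\<lambda>i j. (c *\<^sub>R outer x)$i$j) (\<lambda>i. y$i)" by (rule inner_qf)
    also have "\<dots> = c * (x \<bullet> y) * (x \<bullet> y)" unfolding qf_def outer_def inner_vec_def
      by (simp add: sum_product sum_distrib_left algebra_simps)
    finally show ?thesis .
  qed
  then show ?thesis unfolding psd_def using that by (simp add: mult.assoc)
qed

lemma outer_sym: "transpose (c *\<^sub>R outer x) = c *\<^sub>R outer x"
  unfolding outer_def transpose_def by (simp add: vec_eq_iff mult.commute)

lemma sum_plus_UNIV: "(\<Sum>i\<in>(UNIV::('a::finite + 'b::finite) set). f i) = (\<Sum>i\<in>UNIV. f (Inl i)) + (\<Sum>j\<in>UNIV. f (Inr j))"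
proof -
  have "(\<Sum>i\<in>(UNIV::('a + 'b) set). f i) = (\<Sum>i\<in>(UNIV <+> UNIV). f i)" by simp
  also have "\<dots> = (\<Sum>i\<in>UNIV. f (Inl i)) + (\<Sum>j\<in>UNIV. f (Inr j))"
    by (subst sum.Plus) (auto simp: o_def)
  finally show ?thesis .
qed

lemma young_term:
  fixes b e x u v :: real
  assumes b: "0 < b" "b < 1" and e: "e * (1 - b) = b" and x: "x \<ge> 0" and u: "u > 0" and v: "v > 0"
  shows "v * x \<le> u * x powr (1/b) + (b powr e * (1 - b)) * (v powr (e+1) / u powr e)"
proof (cases "x = 0")
  case True
  then show ?thesis using b u v by simp
next
  case False
  with x have x0: "x > 0" by simp
  define A where "A = u * x powr (1/b) / b"
  define B where "B = b powr e * v powr (e+1) / u powr e"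
  have A0: "A > 0" unfolding A_def using u x0 b by simp
  have B0: "B > 0" unfolding B_def using u v b by simp
  have "A powr b * B powr (1-b) \<le> b * A + (1-b) * B"
    using Youngs_inequality_0[of b "1-b" A B] A0 B0 b by simp
  moreover have "b * A + (1-b) * B = u * x powr (1/b) + (b powr e * (1 - b)) * (v powr (e+1) / u powr e)"
    unfolding A_def B_def using b by (simp add: field_simps)
  moreover have "A powr b * B powr (1-b) = v * x"
  proof -
    have "A powr b = u powr b * x * b powr (-b)"
      unfolding A_def using u x0 b
      by (simp add: powr_mult powr_divide powr_powr powr_minus divide_inverse inverse_powr)
    moreover have "B powr (1-b) = b powr b * v / u powr b"
    proof -
      have "B powr (1-b) = (b powr e) powr (1-b) * (v powr (e+1)) powr (1-b) / (u powr e) powr (1-b)"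
        unfolding B_def using u v b by (simp add: powr_mult powr_divide)
      also have "\<dots> = b powr (e*(1-b)) * v powr ((e+1)*(1-b)) / u powr (e*(1-b))"
        by (simp add: powr_powr)
      also have "(e+1)*(1-b) = 1" using e by (simp add: algebra_simps)
      finally show ?thesis using e v by simp
    qed
    ultimately have "A powr b * B powr (1-b) = (u powr b * x * b powr (-b)) * (b powr b * v / u powr b)"
      by simp
    also have "\<dots> = v * x"
    proof -
      have "u powr b > 0" "b powr b > 0" using u b by auto
      then show ?thesis by (simp add: powr_minus field_simps)
    qed
    finally show ?thesis .
  qed
  ultimately show ?thesis by simp
qed


lemma theta_eq:
  assumes "p > (2::real)"
  shows "theta p = (2/p) powr (2/(p-2)) * (1 - 2/p)"
proof -
  have "p/(p-2) = 2/(p-2) + 1" using assms by (simp add: field_simps)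
  then have "(2/p) powr (p/(p-2)) = (2/p) powr (2/(p-2)) * (2/p)"
    using assms by (simp add: powr_add)
  then show ?thesis unfolding theta_def by (simp add: algebra_simps)
qed

lemma theta_pos: "p > (2::real) \<Longrightarrow> theta p > 0"
  by (subst theta_eq) (auto simp: field_simps)

lemma wd_term:
  fixes p x t u v :: real
  assumes p: "p > 2" and x: "x \<ge> 0" and t: "t \<ge> 0" and u: "u \<ge> 0"
    and c: "v powr (p/(p-2)) \<le> t * u powr (2/(p-2))"
  shows "v * x \<le> u * x powr (p/2) + theta p * t"
proof -
  have th: "theta p > 0" using theta_pos p by simp
  consider "v \<le> 0" | "v > 0" "u = 0" | "v > 0" "u > 0" using u by linarith
  then show ?thesis
  proof cases
    case 1
    then have "v * x \<le> 0" using x by (simp add: mult_nonpos_nonneg)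
    moreover have "0 \<le> u * x powr (p/2) + theta p * t" using u t th by simp
    ultimately show ?thesis by linarith
  next
    case 2
    then have "v powr (p/(p-2)) > 0" by simp
    moreover have "t * u powr (2/(p-2)) = 0" using 2 by simp
    ultimately show ?thesis using c by linarith
  next
    case 3
    have b: "0 < 2/p" "2/p < (1::real)" using p by auto
    have e: "2/(p-2) * (1 - 2/p) = 2/p" using p by (simp add: field_simps)
    have "v * x \<le> u * x powr (1/(2/p)) + ((2/p) powr (2/(p-2)) * (1 - 2/p)) * (v powr (2/(p-2)+1) / u powr (2/(p-2)))"
      by (rule young_term[OF b e x]) (use 3 in auto)
    also have "1/(2/p) = p/2" by simp
    also have "2/(p-2)+1 = p/(p-2)" using p by (simp add: field_simps)
    also have "(2/p) powr (2/(p-2)) * (1 - 2/p) = theta p" using theta_eq p by simp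
    also have "v powr (p/(p-2)) / u powr (2/(p-2)) \<le> t"
      using c 3 by (simp add: pos_divide_le_eq)
    finally show ?thesis using th by (simp add: mult_left_mono)
  qed
qed

lemma psd_diag_nonneg: "psd X \<Longrightarrow> 0 \<le> X$i$i"
  using qf_diag_nonneg[of UNIV i "\<lambda>i j. X$i$j"] by (simp add: psd_iff_qf)

lemma block_bound:
  fixes p u :: real and v t :: "'a::finite \<Rightarrow> real" and x :: "'a \<Rightarrow> real"
  assumes p: "p > 2" and x: "\<And>i. x i \<ge> 0" and t: "\<And>i. t i \<ge> 0" and u: "u \<ge> 0"
    and c: "\<And>i. v i powr (p/(p-2)) \<le> t i * u powr (2/(p-2))"
    and s: "(\<Sum>i\<in>UNIV. \<bar>x i\<bar> powr (p/2)) \<le> 1"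
  shows "(\<Sum>i\<in>UNIV. v i * x i) \<le> u + theta p * (\<Sum>i\<in>UNIV. t i)"
proof -
  have "(\<Sum>i\<in>UNIV. v i * x i) \<le> (\<Sum>i\<in>UNIV. u * \<bar>x i\<bar> powr (p/2) + theta p * t i)"
    by (rule sum_mono) (use wd_term[OF p x t u c] x in auto)
  also have "\<dots> = u * (\<Sum>i\<in>UNIV. \<bar>x i\<bar> powr (p/2)) + theta p * (\<Sum>i\<in>UNIV. t i)"
    by (simp add: sum.distrib sum_distrib_left)
  also have "u * (\<Sum>i\<in>UNIV. \<bar>x i\<bar> powr (p/2)) \<le> u" using s u by (simp add: mult_left_le)
  finally show ?thesis by simp
qed

lemma weak:
  fixes A :: "real^'n::finite^'m::finite" and X :: "real^('m+'n)^('m+'n)"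
  assumes p: "p > 2" and X: "pv_primal_feasible p X" and D: "pv_dual_feasible p A u1 u2 t v"
  shows "frob_inner (half_block A) X \<le> pv_dual_obj p u1 u2 t"
proof -
  have Xs: "transpose X = X" "psd X" and XI: "(\<Sum>i\<in>UNIV. \<bar>X $ Inl i $ Inl i\<bar> powr (p/2)) \<le> 1"
    and XJ: "(\<Sum>j\<in>UNIV. \<bar>X $ Inr j $ Inr j\<bar> powr (p/2)) \<le> 1"
    using X unfolding pv_primal_feasible_def by auto
  have DI: "\<And>i. (v $ Inl i) powr (p/(p-2)) \<le> t $ Inl i * u1 powr (2/(p-2))"
    and DJ: "\<And>j. (v $ Inr j) powr (p/(p-2)) \<le> t $ Inr j * u2 powr (2/(p-2))"
    and u: "u1 \<ge> 0" "u2 \<ge> 0" and t: "\<And>i. t $ i \<ge> 0" and M: "psd (diag_mat v - half_block A)"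
    using D unfolding pv_dual_feasible_def by auto
  have "0 \<le> frob_inner (diag_mat v - half_block A) X" by (rule trace_psd[OF M Xs(2) Xs(1)])
  then have "frob_inner (half_block A) X \<le> (\<Sum>k\<in>UNIV. v$k * X$k$k)"
    by (simp add: frob_diff frob_diag)
  also have "\<dots> = (\<Sum>i\<in>UNIV. v$Inl i * X$Inl i$Inl i) + (\<Sum>j\<in>UNIV. v$Inr j * X$Inr j$Inr j)"
    by (rule sum_plus_UNIV)
  also have "(\<Sum>i\<in>UNIV. v$Inl i * X$Inl i$Inl i) \<le> u1 + theta p * (\<Sum>i\<in>UNIV. t$Inl i)"
    by (rule block_bound[OF p _ _ u(1) DI XI]) (use psd_diag_nonneg[OF Xs(2)] t in auto)
  also have "(\<Sum>j\<in>UNIV. v$Inr j * X$Inr j$Inr j) \<le> u2 + theta p * (\<Sum>j\<in>UNIV. t$Inr j)"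
    by (rule block_bound[OF p _ _ u(2) DJ XJ]) (use psd_diag_nonneg[OF Xs(2)] t in auto)
  also have "u1 + theta p * (\<Sum>i\<in>UNIV. t$Inl i) + (u2 + theta p * (\<Sum>j\<in>UNIV. t$Inr j)) = pv_dual_obj p u1 u2 t"
    unfolding pv_dual_obj_def sum_plus_UNIV[of "\<lambda>k. t$k"] by (simp add: algebra_simps)
  finally show ?thesis by simp
qed

lemma abs_powr_convex:
  fixes s u w a b :: real
  assumes s: "s \<ge> 1" and u: "u \<ge> 0" and w: "w \<ge> 0" and uw: "u + w = 1"
  shows "\<bar>u * a + w * b\<bar> powr s \<le> u * \<bar>a\<bar> powr s + w * \<bar>b\<bar> powr s"
proof -
  have "\<bar>u * a + w * b\<bar> \<le> u * \<bar>a\<bar> + w * \<bar>b\<bar>"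
    using u w by (metis abs_mult abs_of_nonneg abs_triangle_ineq)
  then have "\<bar>u * a + w * b\<bar> powr s \<le> (u * \<bar>a\<bar> + w * \<bar>b\<bar>) powr s"
    using s by (intro powr_mono2) auto
  also have "(u * \<bar>a\<bar> + w * \<bar>b\<bar>) powr s \<le> u * \<bar>a\<bar> powr s + w * \<bar>b\<bar> powr s"
  proof -
    have w1: "w \<le> 1" "u \<le> 1" using u w uw by auto
    consider "a = 0" | "b = 0" | "a \<noteq> 0" "b \<noteq> 0" by blast
    then show ?thesis
    proof cases
      case 1
      have "w powr s \<le> w powr 1" using w w1 s by (intro powr_mono') auto
      then have "w powr s * \<bar>b\<bar> powr s \<le> w * \<bar>b\<bar> powr s" using w by (simp add: mult_right_mono)
      then show ?thesis using 1 w s by (simp add: powr_mult)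
    next
      case 2
      have "u powr s \<le> u powr 1" using u w1 s by (intro powr_mono') auto
      then have "u powr s * \<bar>a\<bar> powr s \<le> u * \<bar>a\<bar> powr s" using u by (simp add: mult_right_mono)
      then show ?thesis using 2 u s by (simp add: powr_mult)
    next
      case 3
      have "(\<lambda>x. x powr s) ((1 - w) *\<^sub>R \<bar>a\<bar> + w *\<^sub>R \<bar>b\<bar>) \<le> (1 - w) * (\<lambda>x. x powr s) \<bar>a\<bar> + w * (\<lambda>x. x powr s) \<bar>b\<bar>"
        by (rule convex_onD[OF powr_convex[OF s]]) (use 3 w w1 in auto)
      moreover have "1 - w = u" using uw by simp
      ultimately show ?thesis by simp
    qed
  qed
  finally show ?thesis .
qed

lemma sum_abs_powr_convex:
  fixes s u w :: real and f g :: "'a::finite \<Rightarrow> real"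
  assumes s: "s \<ge> 1" and u: "u \<ge> 0" and w: "w \<ge> 0" and uw: "u + w = 1"
    and f: "(\<Sum>i\<in>UNIV. \<bar>f i\<bar> powr s) \<le> 1" and g: "(\<Sum>i\<in>UNIV. \<bar>g i\<bar> powr s) \<le> 1"
  shows "(\<Sum>i\<in>UNIV. \<bar>u * f i + w * g i\<bar> powr s) \<le> 1"
proof -
  have "(\<Sum>i\<in>UNIV. \<bar>u * f i + w * g i\<bar> powr s) \<le> (\<Sum>i\<in>UNIV. u * \<bar>f i\<bar> powr s + w * \<bar>g i\<bar> powr s)"
    by (rule sum_mono) (rule abs_powr_convex[OF s u w uw])
  also have "\<dots> = u * (\<Sum>i\<in>UNIV. \<bar>f i\<bar> powr s) + w * (\<Sum>i\<in>UNIV. \<bar>g i\<bar> powr s)"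
    by (simp add: sum.distrib sum_distrib_left)
  also have "\<dots> \<le> u * 1 + w * 1" using u w f g by (intro add_mono mult_left_mono) auto
  finally show ?thesis using uw by simp
qed

lemma limit_le:
  fixes L mu c :: real
  assumes "\<And>r. r < c \<Longrightarrow> 0 \<le> L + mu * r"
  shows "0 \<le> L + mu * c"
proof (rule ccontr)
  assume "\<not> 0 \<le> L + mu * c"
  define dl where "dl = - (L + mu * c)"
  have dl: "dl > 0" using \<open>\<not> _\<close> unfolding dl_def by simp
  define r where "r = c - dl / (2 * (\<bar>mu\<bar> + 1))"
  have "r < c" unfolding r_def using dl by (simp add: field_simps)
  then have "0 \<le> L + mu * r" by (rule assms)
  also have "L + mu * r = - dl - mu * (dl / (2 * (\<bar>mu\<bar> + 1)))"
    unfolding r_def dl_def by (simp add: algebra_simps)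
  also have "mu * (dl / (2 * (\<bar>mu\<bar> + 1))) \<ge> - (dl / 2)"
  proof -
    have "\<bar>mu * (dl / (2 * (\<bar>mu\<bar> + 1)))\<bar> = \<bar>mu\<bar> * dl / (2 * (\<bar>mu\<bar> + 1))"
      using dl by (simp add: abs_mult)
    also have "\<dots> \<le> (\<bar>mu\<bar> + 1) * dl / (2 * (\<bar>mu\<bar> + 1))"
      using dl by (intro divide_right_mono mult_right_mono) auto
    also have "\<dots> = dl / 2" by (simp add: field_simps)
    finally have "\<bar>mu * (dl / (2 * (\<bar>mu\<bar> + 1)))\<bar> \<le> dl / 2" .
    then show ?thesis by (metis abs_le_D2 minus_le_iff)
  qed
  then have "- dl - mu * (dl / (2 * (\<bar>mu\<bar> + 1))) \<le> - dl / 2" by linarith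
  finally show False using dl by linarith
qed

lemma psd_comb:
  assumes "psd X1" "psd X2" "u \<ge> 0" "w \<ge> 0"
  shows "psd (u *\<^sub>R X1 + w *\<^sub>R X2)"
proof -
  have "(u *\<^sub>R X1 + w *\<^sub>R X2) *v x = u *\<^sub>R (X1 *v x) + w *\<^sub>R (X2 *v x)" for x
    by (simp add: vec_eq_iff matrix_vector_mult_def sum.distrib sum_distrib_left algebra_simps)
  then show ?thesis using assms unfolding psd_def by (simp add: inner_add_right)
qed

lemma block_construct:
  fixes p :: real and w :: "'a::finite \<Rightarrow> real"
  assumes p: "p > 2" and w: "\<And>i. w i \<ge> 0"
    and a: "a = (\<Sum>i\<in>UNIV. w i powr (p/(p-2))) powr (1/(p/(p-2)))"
  shows "(\<Sum>i\<in>UNIV. \<bar>(w i / a) powr (2/(p-2))\<bar> powr (p/2)) \<le> 1"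
    and "(\<Sum>i\<in>UNIV. w i * (w i / a) powr (2/(p-2))) = a"
    and "\<And>i. w i powr (p/(p-2)) \<le> (w i powr (p/(p-2)) / ((2/p) * a) powr (2/(p-2))) * ((2/p) * a) powr (2/(p-2))"
    and "(2/p) * a + theta p * (\<Sum>i\<in>UNIV. w i powr (p/(p-2)) / ((2/p) * a) powr (2/(p-2))) = a"
    and "a \<ge> 0"
proof -
  define q where "q = p/(p-2)"
  define e where "e = 2/(p-2)"
  define b where "b = 2/p"
  define Sg where "Sg = (\<Sum>i\<in>UNIV. w i powr q)"
  have q1: "q = e + 1" unfolding q_def e_def using p by (simp add: field_simps)
  have q0: "q > 0" "e > 0" unfolding q_def e_def using p by auto
  have eq: "e * p / 2 = q" unfolding q_def e_def using p by (simp add: field_simps)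
  have b0: "b > 0" unfolding b_def using p by simp
  have Sg0: "Sg \<ge> 0" unfolding Sg_def by (simp add: sum_nonneg)
  have aS: "a = Sg powr (1/q)" unfolding a Sg_def q_def ..
  show "a \<ge> 0" unfolding aS by simp
  have th: "theta p = b powr e * (1 - b)" unfolding b_def e_def using theta_eq[OF p] .
  show "\<And>i. w i powr (p/(p-2)) \<le> (w i powr (p/(p-2)) / ((2/p) * a) powr (2/(p-2))) * ((2/p) * a) powr (2/(p-2))"
  proof -
    fix i
    show "w i powr (p/(p-2)) \<le> (w i powr (p/(p-2)) / ((2/p) * a) powr (2/(p-2))) * ((2/p) * a) powr (2/(p-2))"
    proof (cases "a = 0")
      case True
      then have "Sg = 0" unfolding aS by simp
      then have "w i powr q = 0" unfolding Sg_def using sum_nonneg_eq_0_iff[of UNIV "\<lambda>i. w i powr q"] by simp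
      then show ?thesis unfolding q_def by simp
    next
      case False
      then have "((2/p) * a) powr (2/(p-2)) > 0" using p \<open>a \<ge> 0\<close> by simp
      then show ?thesis by simp
    qed
  qed
  show "(\<Sum>i\<in>UNIV. \<bar>(w i / a) powr (2/(p-2))\<bar> powr (p/2)) \<le> 1"
     "(\<Sum>i\<in>UNIV. w i * (w i / a) powr (2/(p-2))) = a"
     "(2/p) * a + theta p * (\<Sum>i\<in>UNIV. w i powr (p/(p-2)) / ((2/p) * a) powr (2/(p-2))) = a"
  proof -
    have A: "(\<Sum>i\<in>UNIV. \<bar>(w i / a) powr e\<bar> powr (p/2)) \<le> 1 \<and>
      (\<Sum>i\<in>UNIV. w i * (w i / a) powr e) = a \<and>
      b * a + theta p * (\<Sum>i\<in>UNIV. w i powr q / (b * a) powr e) = a"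
    proof (cases "Sg = 0")
      case True
      then have "a = 0" unfolding aS by simp
      moreover have "\<And>i. w i powr q = 0" using True unfolding Sg_def using sum_nonneg_eq_0_iff[of UNIV "\<lambda>i. w i powr q"] by simp
      ultimately show ?thesis using q0 by simp
    next
      case False
      then have S0: "Sg > 0" using Sg0 by simp
      then have a0: "a > 0" unfolding aS by simp
      have aq: "a powr q = Sg" unfolding aS using Sg0 q0 by (simp add: powr_powr)
      have t1: "\<bar>(w i / a) powr e\<bar> powr (p/2) = w i powr q / a powr q" for i
      proof -
        have "\<bar>(w i / a) powr e\<bar> powr (p/2) = (w i / a) powr q" using w[of i] a0 by (simp add: powr_powr eq)
        also have "\<dots> = w i powr q / a powr q" using w[of i] a0 by (simp add: powr_divide)
        finally show ?thesis .
      qed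
      have t2: "w i * (w i / a) powr e = w i powr q / a powr e" for i
      proof (cases "w i = 0")
        case True then show ?thesis using q0 by simp
      next
        case False
        then have "w i > 0" using w[of i] by simp
        then show ?thesis using a0 by (simp add: powr_divide q1 powr_add)
      qed
      have "(\<Sum>i\<in>UNIV. \<bar>(w i / a) powr e\<bar> powr (p/2)) = Sg / a powr q"
        unfolding t1 Sg_def by (simp add: sum_divide_distrib)
      then have r1: "(\<Sum>i\<in>UNIV. \<bar>(w i / a) powr e\<bar> powr (p/2)) \<le> 1" using aq S0 by simp
      have "(\<Sum>i\<in>UNIV. w i * (w i / a) powr e) = Sg / a powr e"
        unfolding t2 Sg_def by (simp add: sum_divide_distrib)
      also have "\<dots> = a powr q / a powr e" using aq by simp
      also have "\<dots> = a" using a0 by (simp add: q1 powr_add)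
      finally have r2: "(\<Sum>i\<in>UNIV. w i * (w i / a) powr e) = a" .
      have "(\<Sum>i\<in>UNIV. w i powr q / (b * a) powr e) = Sg / (b powr e * a powr e)"
        unfolding Sg_def using a0 b0 by (simp add: sum_divide_distrib powr_mult)
      also have "\<dots> = a powr e * a / (b powr e * a powr e)" using aq a0 by (simp add: q1 powr_add)
      also have "\<dots> = a / b powr e" using a0 by simp
      finally have "theta p * (\<Sum>i\<in>UNIV. w i powr q / (b * a) powr e) = (1 - b) * a"
        unfolding th using b0 by simp
      then have r3: "b * a + theta p * (\<Sum>i\<in>UNIV. w i powr q / (b * a) powr e) = a"
        by (simp add: algebra_simps)
      show ?thesis using r1 r2 r3 by blast
    qed
    then show "(\<Sum>i\<in>UNIV. \<bar>(w i / a) powr (2/(p-2))\<bar> powr (p/2)) \<le> 1"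
     "(\<Sum>i\<in>UNIV. w i * (w i / a) powr (2/(p-2))) = a"
     "(2/p) * a + theta p * (\<Sum>i\<in>UNIV. w i powr (p/(p-2)) / ((2/p) * a) powr (2/(p-2))) = a"
      unfolding q_def e_def b_def by auto
  qed
qed

lemma offdiag_bound:
  fixes X :: "real^'k::finite^'k"
  assumes "psd X" "transpose X = X"
  shows "\<bar>X$i$j\<bar> \<le> X$i$i + X$j$j"
proof (cases "i = j")
  case True
  then show ?thesis using psd_diag_nonneg[OF assms(1), of j] by simp
next
  case False
  have Q: "\<forall>f. 0 \<le> qf UNIV (\<lambda>i j. X$i$j) f" using assms(1) by (simp add: psd_iff_qf)
  have "0 \<le> qf UNIV (\<lambda>i j. X$i$j) (\<lambda>k. if k = i then 1 else if k = j then s else 0)" for s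
    using Q by blast
  moreover have "qf UNIV (\<lambda>i j. X$i$j) (\<lambda>k. if k = i then 1 else if k = j then s else 0)
     = 1 * 1 * X$i$i + 1 * s * (X$i$j + X$j$i) + s * s * X$j$j" for s
    unfolding qf_def by (rule quad2) (use False in auto)
  ultimately have "0 \<le> X$i$i + s * (X$i$j + X$j$i) + s * s * X$j$j" for s by simp
  from this[of 1] this[of "-1"] have "0 \<le> X$i$i + 2 * X$i$j + X$j$j" "0 \<le> X$i$i - 2 * X$i$j + X$j$j"
    using transpose_sym[OF assms(2), of i j] by auto
  moreover have "0 \<le> X$i$i" "0 \<le> X$j$j" using psd_diag_nonneg[OF assms(1)] by auto
  ultimately show ?thesis by linarith
qed

lemma feas_diag_le1:
  fixes X :: "real^('m::finite+'n::finite)^('m+'n)"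
  assumes p: "p > 2" and X: "pv_primal_feasible p X"
  shows "\<bar>X$k$k\<bar> \<le> 1"
proof (rule ccontr)
  assume "\<not> \<bar>X$k$k\<bar> \<le> 1"
  then have g: "1 < \<bar>X$k$k\<bar> powr (p/2)" using p by (intro gr_one_powr) auto
  show False
  proof (cases k)
    case (Inl i)
    have "\<bar>X$Inl i$Inl i\<bar> powr (p/2) \<le> (\<Sum>i\<in>UNIV. \<bar>X $ Inl i $ Inl i\<bar> powr (p/2))"
      by (rule member_le_sum) auto
    also have "\<dots> \<le> 1" using X unfolding pv_primal_feasible_def by auto
    finally show False using g Inl by simp
  next
    case (Inr i)
    have "\<bar>X$Inr i$Inr i\<bar> powr (p/2) \<le> (\<Sum>i\<in>UNIV. \<bar>X $ Inr i $ Inr i\<bar> powr (p/2))"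
      by (rule member_le_sum) auto
    also have "\<dots> \<le> 1" using X unfolding pv_primal_feasible_def by auto
    finally show False using g Inr by simp
  qed
qed

lemma feas_bound:
  fixes X :: "real^('m::finite+'n::finite)^('m+'n)"
  assumes p: "p > 2" and X: "pv_primal_feasible p X"
  shows "frob_inner M X \<le> (\<Sum>i\<in>UNIV. \<Sum>j\<in>UNIV. \<bar>M$i$j\<bar> * 2)"
proof -
  have Xs: "psd X" "transpose X = X" using X unfolding pv_primal_feasible_def by auto
  have "M$i$j * X$i$j \<le> \<bar>M$i$j\<bar> * 2" for i j
  proof -
    have "\<bar>X$i$j\<bar> \<le> 2" using offdiag_bound[OF Xs, of i j] feas_diag_le1[OF p X, of i] feas_diag_le1[OF p X, of j]
      by linarith
    then have "\<bar>M$i$j\<bar> * \<bar>X$i$j\<bar> \<le> \<bar>M$i$j\<bar> * 2" by (simp add: mult_left_mono)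
    moreover have "M$i$j * X$i$j \<le> \<bar>M$i$j\<bar> * \<bar>X$i$j\<bar>" by (metis abs_ge_self abs_mult)
    ultimately show ?thesis by linarith
  qed
  then show ?thesis unfolding frob_inner_def by (intro sum_mono) auto
qed

lemma axis_in_C:
  fixes k :: "'m::finite + 'n::finite" and c :: real
  assumes "\<bar>c\<bar> = 1" "p > 0"
  shows "(\<Sum>i\<in>UNIV. \<bar>(axis k c :: real^('m+'n)) $ Inl i\<bar> powr (p/2)) \<le> 1"
    and "(\<Sum>j\<in>UNIV. \<bar>(axis k c :: real^('m+'n)) $ Inr j\<bar> powr (p/2)) \<le> 1"
proof -
  have e: "\<bar>(axis k c :: real^('m+'n)) $ l\<bar> powr (p/2) = (if l = k then 1 else 0)" for l
    using assms by (simp add: axis_def)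
  show "(\<Sum>i\<in>UNIV. \<bar>(axis k c :: real^('m+'n)) $ Inl i\<bar> powr (p/2)) \<le> 1"
    unfolding e by (cases k) (auto simp: sum.delta)
  show "(\<Sum>j\<in>UNIV. \<bar>(axis k c :: real^('m+'n)) $ Inr j\<bar> powr (p/2)) \<le> 1"
    unfolding e by (cases k) (auto simp: sum.delta)
qed

lemma frob_scale: "frob_inner M (c *\<^sub>R X) = c * frob_inner M X"
  unfolding frob_inner_def by (simp add: sum_distrib_left algebra_simps)

lemma frob_diag_outer: "frob_inner (diag_mat v) (outer x) = (\<Sum>k\<in>UNIV. v$k * (x$k * x$k))"
  unfolding frob_diag outer_def by simp

theorem proposition3p3:
  fixes A :: "real^'n^'m" and p :: real
  assumes "p \<in> \<rat>" and "p > 2"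
  shows "theta p > 0 \<and>
    (\<exists>u1 u2 t v. pv_dual_feasible p A u1 u2 t v \<and> pv_dual_obj p u1 u2 t = pv_norm p A) \<and>
    (\<forall>u1 u2 t v. pv_dual_feasible p A u1 u2 t v \<longrightarrow> pv_norm p A \<le> pv_dual_obj p u1 u2 t)"
proof -
  have p: "p > 2" using assms by simp
  define H where "H = half_block A"
  define F where "F = {frob_inner (half_block A) X | X. pv_primal_feasible p (X::real^('m+'n)^('m+'n))}"
  define N where "N = pv_norm p A"
  have NF: "N = Sup F" unfolding N_def pv_norm_def F_def ..
  have feas0: "pv_primal_feasible p (0::real^('m+'n)^('m+'n))"
    unfolding pv_primal_feasible_def psd_def transpose_def by (simp add: vec_eq_iff)
  have Fne: "F \<noteq> {}" unfolding F_def using feas0 by blast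
  have Fbdd: "bdd_above F"
    unfolding F_def bdd_above_def using feas_bound[OF p] by blast
  have upper: "frob_inner H X \<le> N" if "pv_primal_feasible p X" for X
    unfolding NF H_def F_def by (rule cSup_upper) (use that Fbdd[unfolded F_def] in auto)
  have N0: "0 \<le> N" using upper[OF feas0] by (simp add: frob_zero)
  have weakN: "N \<le> pv_dual_obj p u1 u2 t" if "pv_dual_feasible p A u1 u2 t v" for u1 u2 t v
    unfolding NF by (rule cSup_least[OF Fne]) (use weak[OF p _ that] in \<open>auto simp: F_def\<close>)
  define C where "C = {d::real^('m+'n). (\<Sum>i\<in>UNIV. \<bar>d $ Inl i\<bar> powr (p/2)) \<le> 1 \<and> (\<Sum>j\<in>UNIV. \<bar>d $ Inr j\<bar> powr (p/2)) \<le> 1}"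
  define S where "S = {z :: (real^('m+'n)) \<times> real. \<exists>X d r. z = ((\<chi> k. X$k$k - d$k), r) \<and> transpose X = X \<and> psd X \<and> d \<in> C \<and> r < frob_inner H X - N}"
  have s1: "p/2 \<ge> 1" using p by simp
  have convS: "convex S"
    unfolding convex_def
  proof (intro ballI allI impI)
    fix z1 z2 and u w :: real
    assume z1: "z1 \<in> S" and z2: "z2 \<in> S" and u: "0 \<le> u" and w: "0 \<le> w" and uw: "u + w = 1"
    obtain X1 d1 r1 where 1: "z1 = ((\<chi> k. X1$k$k - d1$k), r1)" "transpose X1 = X1" "psd X1" "d1 \<in> C" "r1 < frob_inner H X1 - N"
      using z1 unfolding S_def by blast
    obtain X2 d2 r2 where 2: "z2 = ((\<chi> k. X2$k$k - d2$k), r2)" "transpose X2 = X2" "psd X2" "d2 \<in> C" "r2 < frob_inner H X2 - N"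
      using z2 unfolding S_def by blast
    define X where "X = u *\<^sub>R X1 + w *\<^sub>R X2"
    define d where "d = u *\<^sub>R d1 + w *\<^sub>R d2"
    have "u *\<^sub>R z1 + w *\<^sub>R z2 = ((\<chi> k. X$k$k - d$k), u * r1 + w * r2)"
      unfolding 1(1) 2(1) X_def d_def by (simp add: vec_eq_iff algebra_simps)
    moreover have "transpose X = X"
      using 1(2) 2(2) unfolding X_def transpose_def by (simp add: vec_eq_iff)
    moreover have "psd X" unfolding X_def by (rule psd_comb[OF 1(3) 2(3) u w])
    moreover have "d \<in> C"
      using 1(4) 2(4) unfolding C_def d_def
      by (auto intro!: sum_abs_powr_convex[OF s1 u w uw, simplified])
    moreover have "u * r1 + w * r2 < frob_inner H X - N"
    proof -
      have fX: "frob_inner H X = u * frob_inner H X1 + w * frob_inner H X2"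
        unfolding X_def by (rule frob_lin)
      have a: "u * r1 \<le> u * (frob_inner H X1 - N)" using 1(5) u by (simp add: mult_left_mono)
      have b: "w * r2 \<le> w * (frob_inner H X2 - N)" using 2(5) w by (simp add: mult_left_mono)
      have "u * r1 < u * (frob_inner H X1 - N) \<or> w * r2 < w * (frob_inner H X2 - N)"
        using 1(5) 2(5) u w uw by (cases "u = 0") auto
      moreover have Nuw: "N * u + N * w = N"
      proof -
        have "N * u + N * w = N * (u + w)" by (simp add: algebra_simps)
        then show ?thesis using uw by simp
      qed
      ultimately show ?thesis using a b fX by (auto simp: algebra_simps)
    qed
    ultimately show "u *\<^sub>R z1 + w *\<^sub>R z2 \<in> S" unfolding S_def by blast
  qed
  have notS: "0 \<notin> S"
  proof
    assume "0 \<in> S"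
    then obtain X d r where X: "0 = ((\<chi> k. X$k$k - d$k), r)" "transpose X = X" "psd X" "d \<in> C" "r < frob_inner H X - N"
      unfolding S_def by blast
    have dX: "d$k = X$k$k" for k using X(1) by (simp add: vec_eq_iff zero_prod_def)
    have "pv_primal_feasible p X"
      using X(2,3,4) unfolding pv_primal_feasible_def C_def by (simp add: dX)
    then have "frob_inner H X \<le> N" by (rule upper)
    moreover have "r = 0" using X(1) by (simp add: zero_prod_def)
    ultimately show False using X(5) by simp
  qed
  obtain a where a: "a \<noteq> 0" "\<forall>z\<in>S. 0 \<le> inner a z"
    using separating_hyperplane_set_0[OF convS notS] by blast
  obtain lam mu where lm: "a = (lam, mu)" by (cases a)
  have keyS: "0 \<le> lam \<bullet> (\<chi> k. X$k$k - d$k) + mu * r"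
    if "transpose X = X" "psd X" "d \<in> C" "r < frob_inner H X - N" for X d r
  proof -
    have "((\<chi> k. X$k$k - d$k), r) \<in> S" unfolding S_def using that by blast
    then have "0 \<le> inner (lam, mu) ((\<chi> k. X$k$k - d$k), r)" using a(2) lm by blast
    then show ?thesis by simp
  qed
  have key: "0 \<le> lam \<bullet> (\<chi> k. X$k$k - d$k) + mu * (frob_inner H X - N)"
    if "transpose X = X" "psd X" "d \<in> C" for X d
    by (rule limit_le) (rule keyS[OF that])
  have C0: "(0::real^('m+'n)) \<in> C" unfolding C_def using p by simp
  have mu0: "mu \<le> 0"
  proof -
    have "0 \<le> lam \<bullet> (\<chi> k. (0::real^('m+'n)^('m+'n))$k$k - (0::real^('m+'n))$k) + mu * (- N - 1)"
      by (rule keyS) (use feas0 C0 in \<open>auto simp: pv_primal_feasible_def frob_zero\<close>)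
    then have "0 \<le> mu * (- N - 1)" by (simp add: vec_eq_iff inner_vec_def)
    moreover have "- N - 1 < 0" using N0 by simp
    ultimately show ?thesis by (metis mult_less_0_iff not_le zero_le_mult_iff)
  qed
  have mu_ne: "mu \<noteq> 0"
  proof
    assume mu: "mu = 0"
    have "lam $ k = 0" for k
    proof -
      have ax: "0 \<le> - (c * lam $ k)" if c: "\<bar>c\<bar> = 1" for c
      proof -
        have "axis k c \<in> C" unfolding C_def using axis_in_C[OF c, of p k] p by simp
        then have "0 \<le> lam \<bullet> (\<chi> j. (0::real^('m+'n)^('m+'n))$j$j - (axis k c)$j) + mu * (frob_inner H 0 - N)"
          by (intro key) (use feas0 in \<open>auto simp: pv_primal_feasible_def\<close>)
        moreover have "(\<chi> j. (0::real^('m+'n)^('m+'n))$j$j - (axis k c)$j) = - axis k c" by (simp add: vec_eq_iff)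
        ultimately show ?thesis using mu by (simp add: inner_axis mult.commute)
      qed
      from ax[of 1] ax[of "-1"] show ?thesis by simp
    qed
    then have "lam = 0" by (simp add: vec_eq_iff)
    then show False using a(1) lm mu by (simp add: zero_prod_def)
  qed
  have mneg: "mu < 0" using mu0 mu_ne by simp
  define v where "v = (1 / (- mu)) *\<^sub>R lam"
  have key2: "frob_inner H X - N \<le> v \<bullet> (\<chi> k. X$k$k - d$k)"
    if "transpose X = X" "psd X" "d \<in> C" for X d
  proof -
    have "0 \<le> lam \<bullet> (\<chi> k. X$k$k - d$k) + mu * (frob_inner H X - N)" by (rule key[OF that])
    then have "(- mu) * (frob_inner H X - N) \<le> lam \<bullet> (\<chi> k. X$k$k - d$k)" by simp
    then show ?thesis unfolding v_def using mneg by (simp add: field_simps)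
  qed
  have vd: "v \<bullet> d \<le> N" if "d \<in> C" for d
  proof -
    have "frob_inner H 0 - N \<le> v \<bullet> (\<chi> k. (0::real^('m+'n)^('m+'n))$k$k - d$k)"
      by (rule key2) (use that feas0 in \<open>auto simp: pv_primal_feasible_def\<close>)
    moreover have "(\<chi> k. (0::real^('m+'n)^('m+'n))$k$k - d$k) = - d" by (simp add: vec_eq_iff)
    ultimately show ?thesis by (simp add: frob_zero)
  qed
  have psdv: "psd (diag_mat v - H)"
    unfolding psd_def
  proof
    fix x :: "real^('m+'n)"
    define Q where "Q = frob_inner H (outer x) - frob_inner (diag_mat v) (outer x)"
    have cQ: "c * Q \<le> N" if c: "c \<ge> 0" for c
    proof -
      have "frob_inner H (c *\<^sub>R outer x) - N \<le> v \<bullet> (\<chi> k. (c *\<^sub>R outer x)$k$k - (0::real^('m+'n))$k)"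
        by (rule key2) (use C0 outer_psd[OF c] outer_sym in auto)
      moreover have "v \<bullet> (\<chi> k. (c *\<^sub>R outer x)$k$k - (0::real^('m+'n))$k) = c * frob_inner (diag_mat v) (outer x)"
        unfolding frob_diag_outer by (simp add: inner_vec_def outer_def sum_distrib_left algebra_simps)
      ultimately show ?thesis unfolding Q_def by (simp add: frob_scale algebra_simps)
    qed
    have "Q \<le> 0"
    proof (rule ccontr)
      assume "\<not> Q \<le> 0"
      then have Q0: "Q > 0" by simp
      have "(N + 1) / Q * Q \<le> N" by (rule cQ) (use Q0 N0 in simp)
      then show False using Q0 by simp
    qed
    then show "0 \<le> x \<bullet> ((diag_mat v - H) *v x)"
      unfolding frob_outer[symmetric] frob_diff Q_def by simp
  qed
  define w where "w = (\<chi> k. max (v$k) 0)"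
  have w0: "\<And>k. w$k \<ge> 0" unfolding w_def by simp
  have psdw: "psd (diag_mat w - H)"
    unfolding psd_def
  proof
    fix x :: "real^('m+'n)"
    have "0 \<le> x \<bullet> ((diag_mat v - H) *v x)" using psdv unfolding psd_def by blast
    also have "\<dots> = (\<Sum>k\<in>UNIV. v$k * (x$k * x$k)) - frob_inner H (outer x)"
      unfolding frob_outer[symmetric] frob_diff frob_diag_outer ..
    also have "(\<Sum>k\<in>UNIV. v$k * (x$k * x$k)) \<le> (\<Sum>k\<in>UNIV. w$k * (x$k * x$k))"
      unfolding w_def by (intro sum_mono mult_right_mono) auto
    also have "(\<Sum>k\<in>UNIV. w$k * (x$k * x$k)) - frob_inner H (outer x) = x \<bullet> ((diag_mat w - H) *v x)"
      unfolding frob_outer[symmetric] frob_diff frob_diag_outer ..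
    finally show "0 \<le> x \<bullet> ((diag_mat w - H) *v x)" by simp
  qed
  define aI where "aI = (\<Sum>i\<in>UNIV. (w $ Inl i) powr (p/(p-2))) powr (1/(p/(p-2)))"
  define aJ where "aJ = (\<Sum>j\<in>UNIV. (w $ Inr j) powr (p/(p-2))) powr (1/(p/(p-2)))"
  note BI = block_construct[OF p, of "\<lambda>i. w $ Inl i", OF w0 aI_def]
  note BJ = block_construct[OF p, of "\<lambda>j. w $ Inr j", OF w0 aJ_def]
  define ds where "ds = (\<chi> k. case k of Inl i \<Rightarrow> (w$Inl i / aI) powr (2/(p-2)) | Inr j \<Rightarrow> (w$Inr j / aJ) powr (2/(p-2)))"
  have dsC: "ds \<in> C" unfolding C_def ds_def using BI(1) BJ(1) by simp
  have "v \<bullet> ds = (\<Sum>k\<in>UNIV. w$k * ds$k)"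
    unfolding inner_vec_def
  proof (rule sum.cong)
    fix k :: "'m + 'n"
    show "v $ k \<bullet> ds $ k = w$k * ds$k"
    proof (cases "v$k \<le> 0")
      case True
      then have "w$k = 0" unfolding w_def by simp
      then have "ds$k = 0" unfolding ds_def using p by (cases k) auto
      then show ?thesis by simp
    next
      case False
      then show ?thesis unfolding w_def by simp
    qed
  qed simp
  also have "\<dots> = aI + aJ"
    unfolding sum_plus_UNIV[of "\<lambda>k. w$k * ds$k"] unfolding ds_def using BI(2) BJ(2) by simp
  finally have aN: "aI + aJ \<le> N" using vd[OF dsC] by simp
  define u1 where "u1 = (2/p) * aI"
  define u2 where "u2 = (2/p) * aJ"
  define t where "t = (\<chi> k. case k of Inl i \<Rightarrow> w$Inl i powr (p/(p-2)) / u1 powr (2/(p-2))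
                                     | Inr j \<Rightarrow> w$Inr j powr (p/(p-2)) / u2 powr (2/(p-2)))"
  have feas: "pv_dual_feasible p A u1 u2 t w"
    unfolding pv_dual_feasible_def
  proof (intro conjI allI)
    fix i show "(w $ Inl i) powr (p/(p-2)) \<le> t $ Inl i * u1 powr (2/(p-2))"
      unfolding t_def u1_def using BI(3)[of i] by simp
  next
    fix j show "(w $ Inr j) powr (p/(p-2)) \<le> t $ Inr j * u2 powr (2/(p-2))"
      unfolding t_def u2_def using BJ(3)[of j] by simp
  next
    show "u1 \<ge> 0" unfolding u1_def using BI(5) p by simp
  next
    show "u2 \<ge> 0" unfolding u2_def using BJ(5) p by simp
  next
    fix k show "t $ k \<ge> 0" unfolding t_def by (cases k) auto
  next
    show "psd (diag_mat w - half_block A)" using psdw unfolding H_def .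
  qed
  have obj: "pv_dual_obj p u1 u2 t = aI + aJ"
  proof -
    have "pv_dual_obj p u1 u2 t = (u1 + theta p * (\<Sum>i\<in>UNIV. t $ Inl i)) + (u2 + theta p * (\<Sum>j\<in>UNIV. t $ Inr j))"
      unfolding pv_dual_obj_def sum_plus_UNIV[of "\<lambda>k. t$k"] by (simp add: algebra_simps)
    also have "u1 + theta p * (\<Sum>i\<in>UNIV. t $ Inl i) = aI" unfolding t_def u1_def using BI(4) by simp
    also have "u2 + theta p * (\<Sum>j\<in>UNIV. t $ Inr j) = aJ" unfolding t_def u2_def using BJ(4) by simp
    finally show ?thesis .
  qed
  have "pv_dual_obj p u1 u2 t = pv_norm p A"
    using obj aN weakN[OF feas] unfolding N_def by simp
  then have ex: "\<exists>u1 u2 t v. pv_dual_feasible p A u1 u2 t v \<and> pv_dual_obj p u1 u2 t = pv_norm p A"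
    using feas by blast
  show ?thesis using theta_pos[OF p] ex weakN unfolding N_def by blast
qed

end
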